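(* Let $L=\langle S,A,\to\rangle$ be a labelled transition system, $x,y\in\{o,b\}$, and $s,t\in S$ with $s\equiv^{ed}_{E(x,y)}t$. If there is an infinite sequence $s=s_0\xrightarrow{\tau}s_1\xrightarrow{\tau}s_2\xrightarrow{\tau}\cdots$, then there exist a state $t'$ with $t\twoheadrightarrow^+t'$ and an index $k$ such that $s_k\equiv^{ed}_{E(x,y)}t'$.
   Context: An LTS is $\langle S,A,\to\rangle$ with states $S$, actions $A$ containing the internal action $\tau$, and $\to\subseteq S\times A\times S$; write $s\xrightarrow{a}t$ and $\twoheadrightarrow^+$ for the transitive closure of $\xrightarrow{\tau}$. Game with explicit divergence. Let $\frown,\smile$ be formal tags and $E\subseteq\{\frown,\smile\}$. Spoiler-owned configurations $\langle (s,t),c,m,r\rangle_S$ and Duplicator-owned $\langle (s,t),c,m,r\rangle_D$ have $(s,t)\in S\times S$, $c\in (A\times S)\cup\{\dagger\}$, $m\in (S\times\{\frown,\smile\})\cup\{\dagger\}$, $r\in\{*,\checkmark\}$. From $\langle (s,t),c,m,r\rangle_S$ Spoiler may: (S1) move to $\langle (s,t),c,m,*\rangle_D$ if $c\neq\dagger$; (S2a) for some $s\xrightarrow{a}s'$, move to $\langle (s,t),(a,s'),(t,\frown),*\rangle_D$ if $c=\dagger$; (S2b) for some $s\xrightarrow{a}s'$, move to $\langle (s,t),(a,s'),(t,\frown),\checkmark\rangle_D$ if $c\neq (a,s')$; (S3) for some $t\xrightarrow{a}t'$, move to $\langle (t,s),(a,t'),(s,\frown),\checkmark\rangle_D$. From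 $\langle (u,v),(a,u'),(\bar v,f),r\rangle_D$ Duplicator may: (D1) move to $\langle (u',\bar v),\dagger,\dagger,*\rangle_S$ if $a=\tau$; (D2) if $f=\frown$ and $\bar v\xrightarrow{a}v'$: (a) move to $\langle (u',v'),(a,u'),(v',\smile),*\rangle_S$, or (b) move to $\langle (u',v'),\dagger,\dagger,\checkmark\rangle_S$, or (c) only if $\smile\in E$, move to $\langle (u,v),(a,u'),(v',\smile),*\rangle_S$; (D3) for some $\bar v\xrightarrow{\tau}v'$: (a) move to $\langle (u,v'),(a,u'),(v',f),*\rangle_S$, or (b) only if $f=\smile$, move to $\langle (u',v'),\dagger,\dagger,\checkmark\rangle_S$, or (c) only if $f\in E$, move to $\langle (u,v),(a,u'),(v',f),*\rangle_S$. Duplicator wins a finite play if Spoiler gets stuck, and an infinite play if it has infinitely many $\checkmark$ rewards; other plays are won by Spoiler. $s\equiv^{ed}_E t$ iff Duplicator has a strategy winning all plays from $\langle (s,t),\dagger,\dagger,*\rangle_S$. $E(x,y)$ is the smallest set with $\frown\in E(o,y)$ and $\smile\in E(x,o)$ for all $x,y\in\{o,b\}$. *)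

theory Defs
  imports Main
begin

datatype tag = Frown | Smile
datatype ob = Ob_o | Ob_b
datatype player = Spl | Dup

text \<open>Configurations: owner, pair of states, challenge c (None = dagger),
  memory m (None = dagger), reward r (True = checkmark, False = star).\<close>
datatype ('s, 'a) conf =
  Conf player "'s \<times> 's" "('a \<times> 's) option" "('s \<times> tag) option" bool

fun owner :: "('s, 'a) conf \<Rightarrow> player" where
  "owner (Conf p _ _ _ _) = p"

fun reward :: "('s, 'a) conf \<Rightarrow> bool" where
  "reward (Conf _ _ _ _ r) = r"

inductive ed_move :: "('s \<Rightarrow> 'a \<Rightarrow> 's \<Rightarrow> bool) \<Rightarrow> 'a \<Rightarrow> tag set
    \<Rightarrow> ('s, 'a) conf \<Rightarrow> ('s, 'a) conf \<Rightarrow> bool"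
  for tr :: "'s \<Rightarrow> 'a \<Rightarrow> 's \<Rightarrow> bool" and tau :: 'a and E :: "tag set" where
  S1: "c \<noteq> None \<Longrightarrow> ed_move tr tau E (Conf Spl (s,t) c m r) (Conf Dup (s,t) c m False)"
| S2a: "c = None \<Longrightarrow> tr s a s' \<Longrightarrow>
    ed_move tr tau E (Conf Spl (s,t) c m r) (Conf Dup (s,t) (Some (a,s')) (Some (t,Frown)) False)"
| S2b: "c \<noteq> Some (a,s') \<Longrightarrow> tr s a s' \<Longrightarrow>
    ed_move tr tau E (Conf Spl (s,t) c m r) (Conf Dup (s,t) (Some (a,s')) (Some (t,Frown)) True)"
| S3: "tr t a t' \<Longrightarrow>
    ed_move tr tau E (Conf Spl (s,t) c m r) (Conf Dup (t,s) (Some (a,t')) (Some (s,Frown)) True)"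
| D1: "a = tau \<Longrightarrow>
    ed_move tr tau E (Conf Dup (u,v) (Some (a,u')) (Some (vb,f)) r) (Conf Spl (u',vb) None None False)"
| D2a: "f = Frown \<Longrightarrow> tr vb a v' \<Longrightarrow>
    ed_move tr tau E (Conf Dup (u,v) (Some (a,u')) (Some (vb,f)) r)
      (Conf Spl (u',v') (Some (a,u')) (Some (v',Smile)) False)"
| D2b: "f = Frown \<Longrightarrow> tr vb a v' \<Longrightarrow>
    ed_move tr tau E (Conf Dup (u,v) (Some (a,u')) (Some (vb,f)) r) (Conf Spl (u',v') None None True)"
| D2c: "f = Frown \<Longrightarrow> tr vb a v' \<Longrightarrow> Smile \<in> E \<Longrightarrow>
    ed_move tr tau E (Conf Dup (u,v) (Some (a,u')) (Some (vb,f)) r)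
      (Conf Spl (u,v) (Some (a,u')) (Some (v',Smile)) False)"
| D3a: "tr vb tau v' \<Longrightarrow>
    ed_move tr tau E (Conf Dup (u,v) (Some (a,u')) (Some (vb,f)) r)
      (Conf Spl (u,v') (Some (a,u')) (Some (v',f)) False)"
| D3b: "tr vb tau v' \<Longrightarrow> f = Smile \<Longrightarrow>
    ed_move tr tau E (Conf Dup (u,v) (Some (a,u')) (Some (vb,f)) r) (Conf Spl (u',v') None None True)"
| D3c: "tr vb tau v' \<Longrightarrow> f \<in> E \<Longrightarrow>
    ed_move tr tau E (Conf Dup (u,v) (Some (a,u')) (Some (vb,f)) r)
      (Conf Spl (u,v) (Some (a,u')) (Some (v',f)) False)"

text \<open>Duplicator strategies are history dependent: they map a finite play
  (list of configurations, ending in the current one) to the next configuration.\<close>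
type_synonym ('s, 'a) dstrategy = "('s, 'a) conf list \<Rightarrow> ('s, 'a) conf"

definition fin_play :: "('s \<Rightarrow> 'a \<Rightarrow> 's \<Rightarrow> bool) \<Rightarrow> 'a \<Rightarrow> tag set \<Rightarrow> ('s, 'a) dstrategy
    \<Rightarrow> ('s, 'a) conf \<Rightarrow> ('s, 'a) conf list \<Rightarrow> bool" where
  "fin_play tr tau E \<sigma> c0 ps \<longleftrightarrow> ps \<noteq> [] \<and> ps ! 0 = c0 \<and>
     (\<forall>i. Suc i < length ps \<longrightarrow> ed_move tr tau E (ps ! i) (ps ! Suc i) \<and>
        (owner (ps ! i) = Dup \<longrightarrow> ps ! Suc i = \<sigma> (take (Suc i) ps)))"

definition inf_play :: "('s \<Rightarrow> 'a \<Rightarrow> 's \<Rightarrow> bool) \<Rightarrow> 'a \<Rightarrow> tag set \<Rightarrow> ('s, 'a) dstrategy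
    \<Rightarrow> ('s, 'a) conf \<Rightarrow> (nat \<Rightarrow> ('s, 'a) conf) \<Rightarrow> bool" where
  "inf_play tr tau E \<sigma> c0 p \<longleftrightarrow> p 0 = c0 \<and>
     (\<forall>i. ed_move tr tau E (p i) (p (Suc i)) \<and>
        (owner (p i) = Dup \<longrightarrow> p (Suc i) = \<sigma> (map p [0..<Suc i])))"

text \<open>sigma is winning for Duplicator from c0: along every consistent finite play ending
  in a Duplicator configuration, sigma proposes a legal move (so every maximal finite
  consistent play ends with Spoiler stuck), and every consistent infinite play has
  infinitely many checkmark rewards.\<close>
definition dup_wins :: "('s \<Rightarrow> 'a \<Rightarrow> 's \<Rightarrow> bool) \<Rightarrow> 'a \<Rightarrow> tag set \<Rightarrow> ('s, 'a) dstrategy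
    \<Rightarrow> ('s, 'a) conf \<Rightarrow> bool" where
  "dup_wins tr tau E \<sigma> c0 \<longleftrightarrow>
     (\<forall>ps. fin_play tr tau E \<sigma> c0 ps \<longrightarrow> owner (last ps) = Dup \<longrightarrow>
        ed_move tr tau E (last ps) (\<sigma> ps)) \<and>
     (\<forall>p. inf_play tr tau E \<sigma> c0 p \<longrightarrow> (\<exists>\<^sub>\<infinity>i. reward (p i)))"

definition ed_equiv :: "('s \<Rightarrow> 'a \<Rightarrow> 's \<Rightarrow> bool) \<Rightarrow> 'a \<Rightarrow> tag set \<Rightarrow> 's \<Rightarrow> 's \<Rightarrow> bool" where
  "ed_equiv tr tau E s t \<longleftrightarrow> (\<exists>\<sigma>. dup_wins tr tau E \<sigma> (Conf Spl (s,t) None None False))"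

definition Eset :: "ob \<Rightarrow> ob \<Rightarrow> tag set" where
  "Eset x y = {f. (f = Frown \<and> x = Ob_o) \<or> (f = Smile \<and> y = Ob_o)}"

definition tau_plus :: "('s \<Rightarrow> 'a \<Rightarrow> 's \<Rightarrow> bool) \<Rightarrow> 'a \<Rightarrow> 's \<Rightarrow> 's \<Rightarrow> bool" where
  "tau_plus tr tau = (\<lambda>u v. tr u tau v)\<^sup>+\<^sup>+"

end

theory Submission
  imports Defs "HOL-Library.Infinite_Set"
begin

fun good :: "('s \<Rightarrow> 'a \<Rightarrow> 's \<Rightarrow> bool) \<Rightarrow> 'a \<Rightarrow> (nat \<Rightarrow> 's) \<Rightarrow> 's \<Rightarrow> ('s,'a) conf \<Rightarrow> bool" where
  "good tr tau ss t (Conf Spl (u,w) None None r) =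
     (u \<in> range ss \<and> (w = t \<or> tau_plus tr tau t w) \<and> (r \<longrightarrow> tau_plus tr tau t w))"
| "good tr tau ss t (Conf p (u,v) (Some (a,u')) (Some (vb,f)) r) =
     (a = tau \<and> u' \<in> range ss \<and> (vb = t \<or> tau_plus tr tau t vb) \<and> \<not> r)"
| "good tr tau ss t _ = False"

definition spl :: "'a \<Rightarrow> (nat \<Rightarrow> 's) \<Rightarrow> ('s,'a) conf \<Rightarrow> ('s,'a) conf" where
  "spl tau ss c = (case c of
     Conf p (u,w) None m r \<Rightarrow> Conf Dup (u,w) (Some (tau, ss (Suc (SOME k. ss k = u)))) (Some (w, Frown)) False
   | Conf p uw (Some x) m r \<Rightarrow> Conf Dup uw (Some x) m False)"

lemma good_dup:
  assumes "good tr tau ss t c" "owner c = Dup" "ed_move tr tau E c c'"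
  shows "good tr tau ss t c'"
  using assms(3) assms(1,2)
  by (cases rule: ed_move.cases)
     (auto simp: tau_plus_def intro: tranclp.trancl_into_trancl)

lemma good_spl:
  assumes "good tr tau ss t c" "owner c \<noteq> Dup" "\<forall>i. tr (ss i) tau (ss (Suc i))"
  shows "ed_move tr tau E c (spl tau ss c) \<and> good tr tau ss t (spl tau ss c)"
proof (cases c)
  case (Conf p st cc m r)
  obtain u w where st: "st = (u,w)" by (cases st)
  have p: "p = Spl" using assms(2) Conf by (cases p) auto
  show ?thesis
  proof (cases cc)
    case None
    with assms(1) Conf st p have m: "m = None" and ur: "u \<in> range ss"
      and w: "w = t \<or> tau_plus tr tau t w"
      by (cases m; auto)+
    from ur obtain k where "ss k = u" by auto
    hence e: "ss (SOME k. ss k = u) = u" by (rule someI)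
    have tr: "tr u tau (ss (Suc (SOME k. ss k = u)))" using assms(3) e by metis
    show ?thesis using Conf st p None m ur w tr
      by (auto simp: spl_def intro: ed_move.S2a)
  next
    case (Some x)
    obtain a u' where x: "x = (a,u')" by (cases x)
    from assms(1) Conf st p Some x obtain vb f where m: "m = Some (vb,f)"
      by (cases m) auto
    have g: "good tr tau ss t (Conf Dup (u,w) (Some (a,u')) (Some (vb,f)) False)"
      using assms(1) Conf st p Some x m by simp
    have sp: "spl tau ss c = Conf Dup (u,w) (Some (a,u')) (Some (vb,f)) False"
      using Conf st Some x m by (simp add: spl_def)
    have "ed_move tr tau E (Conf Spl (u,w) (Some (a,u')) (Some (vb,f)) r) (Conf Dup (u,w) (Some (a,u')) (Some (vb,f)) False)"
      by (rule ed_move.S1) simp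
    thus ?thesis using g sp Conf st p Some x m by simp
  qed
qed

lemma move_reward:
  assumes "ed_move tr tau E (Conf Spl st c m r) d"
  shows "ed_move tr tau E (Conf Spl st c m r') d"
  using assms by (cases rule: ed_move.cases) (auto intro: ed_move.intros)

lemma inf_fin:
  "inf_play tr tau E \<sigma> c0 p \<longleftrightarrow> p 0 = c0 \<and> (\<forall>n. fin_play tr tau E \<sigma> c0 (map p [0..<Suc n]))"
proof
  assume H: "inf_play tr tau E \<sigma> c0 p"
  have H1: "\<And>i. ed_move tr tau E (p i) (p (Suc i))"
    and H2: "\<And>i. owner (p i) = Dup \<Longrightarrow> p (Suc i) = \<sigma> (map p [0..<Suc i])"
    and H0: "p 0 = c0"
    using H unfolding inf_play_def by blast+
  show "p 0 = c0 \<and> (\<forall>n. fin_play tr tau E \<sigma> c0 (map p [0..<Suc n]))"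
  proof (intro conjI allI)
    show "p 0 = c0" by (rule H0)
    fix n
    have ne: "map p [0..<Suc n] \<noteq> []" by (simp del: upt_Suc)
    have z: "map p [0..<Suc n] ! 0 = c0" using H0 by (simp del: upt_Suc)
    have st: "ed_move tr tau E (map p [0..<Suc n] ! i) (map p [0..<Suc n] ! Suc i) \<and>
        (owner (map p [0..<Suc n] ! i) = Dup \<longrightarrow> map p [0..<Suc n] ! Suc i = \<sigma> (take (Suc i) (map p [0..<Suc n])))"
      if i: "Suc i < length (map p [0..<Suc n])" for i
    proof -
      have i': "Suc i < Suc n" using i by simp
      have tk: "take (Suc i) (map p [0..<Suc n]) = map p [0..<Suc i]"
        using i' by (simp add: take_map del: upt_Suc)
      have a: "map p [0..<Suc n] ! i = p i" using i' by (simp del: upt_Suc)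
      have b: "map p [0..<Suc n] ! Suc i = p (Suc i)" using i' by (simp del: upt_Suc)
      show ?thesis unfolding a b tk using H1 H2 by blast
    qed
    show "fin_play tr tau E \<sigma> c0 (map p [0..<Suc n])"
      unfolding fin_play_def using ne z st by blast
  qed
next
  assume H: "p 0 = c0 \<and> (\<forall>n. fin_play tr tau E \<sigma> c0 (map p [0..<Suc n]))"
  show "inf_play tr tau E \<sigma> c0 p"
    unfolding inf_play_def
  proof (rule conjI)
    show "p 0 = c0" using H by simp
    show "\<forall>i. ed_move tr tau E (p i) (p (Suc i)) \<and>
        (owner (p i) = Dup \<longrightarrow> p (Suc i) = \<sigma> (map p [0..<Suc i]))"
    proof
    fix i
    have F: "fin_play tr tau E \<sigma> c0 (map p [0..<Suc (Suc i)])" using H by blast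
    have tk: "take (Suc i) (map p [0..<Suc (Suc i)]) = map p [0..<Suc i]"
      by (simp add: take_map del: upt_Suc)
    have l: "Suc i < length (map p [0..<Suc (Suc i)])" by simp
    have a: "map p [0..<Suc (Suc i)] ! i = p i" by (simp del: upt_Suc)
    have b: "map p [0..<Suc (Suc i)] ! Suc i = p (Suc i)" by (simp del: upt_Suc)
    have "ed_move tr tau E (map p [0..<Suc (Suc i)] ! i) (map p [0..<Suc (Suc i)] ! Suc i) \<and>
        (owner (map p [0..<Suc (Suc i)] ! i) = Dup \<longrightarrow>
          map p [0..<Suc (Suc i)] ! Suc i = \<sigma> (take (Suc i) (map p [0..<Suc (Suc i)])))"
      using F l unfolding fin_play_def by blast
    thus "ed_move tr tau E (p i) (p (Suc i)) \<and>
        (owner (p i) = Dup \<longrightarrow> p (Suc i) = \<sigma> (map p [0..<Suc i]))"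
      using a b tk by metis
  qed
  qed
qed

lemma good_reward:
  assumes "good tr tau ss t c" "reward c"
  shows "\<exists>k w. c = Conf Spl (ss k, w) None None True \<and> tau_plus tr tau t w"
proof (cases c)
  case (Conf p st cc m r)
  obtain u w where st: "st = (u,w)" by (cases st)
  show ?thesis using assms Conf st
    by (cases p; cases cc; cases m) auto
qed

lemma fin_play_take:
  assumes "fin_play tr tau E \<sigma> c0 ps" "0 < k"
  shows "fin_play tr tau E \<sigma> c0 (take k ps)"
  using assms unfolding fin_play_def by (auto simp: min_def)

lemma shift_fin:
  fixes tr :: "'s \<Rightarrow> 'a \<Rightarrow> 's \<Rightarrow> bool"
  assumes F: "fin_play tr tau E \<sigma> c0 (B @ [Conf Spl st None None r])"
    and P: "fin_play tr tau E (\<lambda>ps. \<sigma> (B @ ps[0 := Conf Spl st None None r])) (Conf Spl st None None False) ps"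
  shows "fin_play tr tau E \<sigma> c0 (B @ ps[0 := Conf Spl st None None r])"
proof -
  define c :: "('s,'a) conf" where "c = Conf Spl st None None r"
  define c' :: "('s,'a) conf" where "c' = Conf Spl st None None False"
  define L where "L = length B"
  define q where "q = B @ ps[0 := c]"
  have ps: "ps \<noteq> []" "ps ! 0 = c'" using P by (auto simp: fin_play_def c'_def)
  have Fc: "fin_play tr tau E \<sigma> c0 (B @ [c])" using F c_def by simp
  have Pc: "fin_play tr tau E (\<lambda>ps. \<sigma> (B @ ps[0 := c])) c' ps" using P c_def c'_def by simp
  have low: "q ! j = (B @ [c]) ! j" if "j \<le> L" for j
    using that ps unfolding q_def L_def
    by (cases "j < length B") (auto simp: nth_append)
  have lq: "length q = L + length ps" by (simp add: q_def L_def)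
  have "fin_play tr tau E \<sigma> c0 q"
    unfolding fin_play_def
  proof (intro conjI)
    show "q \<noteq> []" using ps by (simp add: q_def)
    show "q ! 0 = c0" using low[of 0] Fc by (simp add: fin_play_def)
  next
    show "\<forall>i. Suc i < length q \<longrightarrow> ed_move tr tau E (q ! i) (q ! Suc i) \<and> (owner (q ! i) = Dup \<longrightarrow> q ! Suc i = \<sigma> (take (Suc i) q))"
    proof (intro allI impI)
    fix i assume i: "Suc i < length q"
    show "ed_move tr tau E (q ! i) (q ! Suc i) \<and> (owner (q ! i) = Dup \<longrightarrow> q ! Suc i = \<sigma> (take (Suc i) q))"
    proof (cases "Suc i \<le> L")
      case True
      have tk: "take (Suc i) q = take (Suc i) (B @ [c])"
        using True unfolding q_def L_def by simp
      have "Suc i < length (B @ [c])" using True L_def by simp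
      thus ?thesis using Fc low[of i] low[of "Suc i"] True tk
        unfolding fin_play_def by auto
    next
      case False
      define j where "j = i - L"
      have ij: "i = L + j" using False j_def by simp
      have j: "Suc j < length ps" using i lq ij by simp
      have qi: "q ! i = ps[0 := c] ! j" using ij by (simp add: q_def L_def nth_append)
      have qs: "q ! Suc i = ps ! Suc j" using ij j by (simp add: q_def L_def nth_append)
      have tk: "take (Suc i) q = B @ (take (Suc j) ps)[0 := c]"
        using ij by (simp add: q_def L_def take_update_swap)
      have Pj: "ed_move tr tau E (ps ! j) (ps ! Suc j) \<and>
         (owner (ps ! j) = Dup \<longrightarrow> ps ! Suc j = \<sigma> (B @ (take (Suc j) ps)[0 := c]))"
        using Pc j unfolding fin_play_def by blast
      show ?thesis
      proof (cases "j = 0")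
        case True
        have "q ! i = c" using qi True ps by simp
        moreover have "ed_move tr tau E c (ps ! Suc j)"
          using Pj True ps move_reward unfolding c_def c'_def by metis
        ultimately show ?thesis using qs by (simp add: c_def)
      next
        case False
        have "q ! i = ps ! j" using qi False by simp
        thus ?thesis using qs tk Pj by simp
      qed
    qed
  qed
  qed
  thus ?thesis using q_def c_def by simp
qed

lemma shift:
  fixes tr :: "'s \<Rightarrow> 'a \<Rightarrow> 's \<Rightarrow> bool"
  assumes F: "fin_play tr tau E \<sigma> c0 (B @ [Conf Spl st None None r])"
    and W: "dup_wins tr tau E \<sigma> c0"
  shows "dup_wins tr tau E (\<lambda>ps. \<sigma> (B @ ps[0 := Conf Spl st None None r])) (Conf Spl st None None False)"
proof -
  define c :: "('s,'a) conf" where "c = Conf Spl st None None r"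
  define c' :: "('s,'a) conf" where "c' = Conf Spl st None None False"
  define \<sigma>' where "\<sigma>' = (\<lambda>ps. \<sigma> (B @ ps[0 := c]))"
  define L where "L = length B"
  have SF: "fin_play tr tau E \<sigma> c0 (B @ ps[0 := c])" if "fin_play tr tau E \<sigma>' c' ps" for ps
    using shift_fin[OF F, of ps] that unfolding \<sigma>'_def c_def c'_def by simp
  have part1: "ed_move tr tau E (last ps) (\<sigma>' ps)"
    if P: "fin_play tr tau E \<sigma>' c' ps" and O: "owner (last ps) = Dup" for ps
  proof -
    have ps: "ps \<noteq> []" "ps ! 0 = c'" using P by (auto simp: fin_play_def)
    have "length ps \<noteq> 1"
    proof
      assume "length ps = 1"
      hence "last ps = ps ! 0" by (cases ps) auto
      thus False using O ps by (simp add: c'_def)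
    qed
    hence l2: "length ps \<ge> 2" using ps by (cases ps) (auto simp: Suc_le_eq)
    have "last (B @ ps[0 := c]) = last ps"
      using l2 by (cases ps) (auto simp: last_conv_nth)
    note lst = this
    have W1: "\<forall>ps. fin_play tr tau E \<sigma> c0 ps \<longrightarrow> owner (last ps) = Dup \<longrightarrow> ed_move tr tau E (last ps) (\<sigma> ps)"
      using W by (simp add: dup_wins_def)
    have O2: "owner (last (B @ ps[0 := c])) = Dup" using O lst by simp
    have "ed_move tr tau E (last (B @ ps[0 := c])) (\<sigma> (B @ ps[0 := c]))"
      using W1 SF[OF P] O2 by blast
    thus ?thesis unfolding \<sigma>'_def using lst by simp
  qed
  have part2: "\<exists>\<^sub>\<infinity>i. reward (p i)" if P: "inf_play tr tau E \<sigma>' c' p" for p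
  proof -
    define p' where "p' i = (if i < L then B ! i else if i = L then c else p (i - L))" for i
    have c0: "(B @ [c]) ! 0 = c0" using F c_def by (simp add: fin_play_def)
    have pf: "fin_play tr tau E \<sigma>' c' (map p [0..<Suc n])" for n
      using P unfolding inf_fin by blast
    have "fin_play tr tau E \<sigma> c0 (map p' [0..<Suc n])" for n
    proof (cases "n < L")
      case True
      have "map p' [0..<Suc n] = take (Suc n) (B @ [c])"
        by (rule nth_equalityI) (use True in \<open>auto simp: p'_def L_def nth_append less_Suc_eq\<close>)
      thus ?thesis using fin_play_take[OF F[folded c_def], of "Suc n"] by simp
    next
      case False
      have "map p' [0..<Suc n] = B @ (map p [0..<Suc (n - L)])[0 := c]"
      proof (rule nth_equalityI)
        show "length (map p' [0..<Suc n]) = length (B @ (map p [0..<Suc (n - L)])[0 := c])"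
          using False by (simp add: L_def)
      next
        fix k assume "k < length (map p' [0..<Suc n])"
        hence k: "k < Suc n" by simp
        show "map p' [0..<Suc n] ! k = (B @ (map p [0..<Suc (n - L)])[0 := c]) ! k"
          using k False
          by (auto simp: p'_def L_def nth_append nth_list_update simp del: upt_Suc)
      qed
      thus ?thesis using SF[OF pf[of "n - L"]] by simp
    qed
    moreover have "p' 0 = c0" using c0 by (cases "L = 0") (auto simp: p'_def L_def nth_append)
    ultimately have "inf_play tr tau E \<sigma> c0 p'" unfolding inf_fin by blast
    hence I: "\<exists>\<^sub>\<infinity>i. reward (p' i)" using W by (simp add: dup_wins_def)
    show ?thesis unfolding INFM_nat
    proof
      fix m
      obtain n where n: "n > m + L" "reward (p' n)" using I unfolding INFM_nat by blast
      hence "reward (p (n - L))" by (simp add: p'_def)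
      thus "\<exists>n>m. reward (p n)" using n(1) by (intro exI[of _ "n - L"]) auto
    qed
  qed
  show ?thesis unfolding dup_wins_def using part1 part2
    unfolding \<sigma>'_def c_def c'_def by blast
qed

lemma main:
  fixes tr :: "'s \<Rightarrow> 'a \<Rightarrow> 's \<Rightarrow> bool"
  assumes W: "dup_wins tr tau E \<sigma> (Conf Spl (ss 0, t) None None False)"
    and T: "\<forall>i. tr (ss i) tau (ss (Suc i))"
  shows "\<exists>t' k. tau_plus tr tau t t' \<and> ed_equiv tr tau E (ss k) t'"
proof -
  define c0 :: "('s,'a) conf" where "c0 = Conf Spl (ss 0, t) None None False"
  define stp where "stp ps = (if owner (last ps) = Dup then \<sigma> ps else spl tau ss (last ps))" for ps
  define pl where "pl = rec_nat [c0] (\<lambda>n ps. ps @ [stp ps])"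
  have pl0: "pl 0 = [c0]" by (simp add: pl_def)
  have plS: "pl (Suc n) = pl n @ [stp (pl n)]" for n by (simp add: pl_def)
  have len: "length (pl n) = Suc n" for n by (induction n) (auto simp: pl0 plS)
  have pref: "pl m ! i = pl n ! i" if "n \<le> m" "i \<le> n" for n m i
    using that
  proof (induction m)
    case 0 thus ?case by simp
  next
    case (Suc m)
    show ?case
    proof (cases "n = Suc m")
      case True thus ?thesis by simp
    next
      case False
      hence "n \<le> m" using Suc by simp
      hence "pl m ! i = pl n ! i" using Suc by simp
      moreover have "i < length (pl m)" using len[of m] \<open>n \<le> m\<close> Suc by simp
      ultimately show ?thesis by (simp add: plS nth_append)
    qed
  qed
  define play where "play i = pl i ! i" for i
  have plmap: "pl n = map play [0..<Suc n]" for n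
  proof (rule nth_equalityI)
    show "length (pl n) = length (map play [0..<Suc n])" by (simp add: len del: upt_Suc)
  next
    fix k assume "k < length (pl n)"
    hence k: "k < Suc n" by (simp add: len)
    have "pl n ! k = pl k ! k" using pref[of k n k] k by simp
    thus "pl n ! k = map play [0..<Suc n] ! k" using k by (simp add: play_def del: upt_Suc)
  qed
  have lastpl: "last (pl n) = play n" for n
    using len[of n] by (metis last_conv_nth diff_Suc_1 list.size(3) nat.distinct(1) play_def)
  have inv: "fin_play tr tau E \<sigma> c0 (pl n) \<and> good tr tau ss t (play n)" for n
  proof (induction n)
    case 0
    show ?case by (simp add: pl0 play_def fin_play_def c0_def)
  next
    case (Suc n)
    define ps where "ps = pl n"
    define c where "c = play n"
    define c' where "c' = stp ps"
    have F: "fin_play tr tau E \<sigma> c0 ps" and G: "good tr tau ss t c"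
      using Suc by (auto simp: ps_def c_def)
    have lps: "last ps = c" by (simp add: ps_def c_def lastpl)
    have mv: "ed_move tr tau E c c' \<and> good tr tau ss t c'"
    proof (cases "owner c = Dup")
      case True
      have "ed_move tr tau E c c'"
      proof -
        have W1: "\<forall>ps. fin_play tr tau E \<sigma> c0 ps \<longrightarrow> owner (last ps) = Dup \<longrightarrow> ed_move tr tau E (last ps) (\<sigma> ps)"
          using W by (simp add: dup_wins_def c0_def)
        have "c' = \<sigma> ps" using True lps by (simp add: c'_def stp_def)
        thus ?thesis using W1[rule_format, OF F] True lps by simp
      qed
      thus ?thesis using good_dup[OF G True] by blast
    next
      case False
      thus ?thesis using good_spl[OF G False T] lps unfolding c'_def stp_def by auto
    qed
    have lenps: "length ps = Suc n" by (simp add: ps_def len)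
    have pS: "play (Suc n) = c'" using lenps by (simp add: play_def plS ps_def c'_def nth_append)
    have "fin_play tr tau E \<sigma> c0 (ps @ [c'])"
      unfolding fin_play_def
    proof (intro conjI)
      show "ps @ [c'] \<noteq> []" by simp
      show "(ps @ [c']) ! 0 = c0" using F lenps by (simp add: fin_play_def nth_append)
      show "\<forall>i. Suc i < length (ps @ [c']) \<longrightarrow> ed_move tr tau E ((ps @ [c']) ! i) ((ps @ [c']) ! Suc i) \<and>
          (owner ((ps @ [c']) ! i) = Dup \<longrightarrow> (ps @ [c']) ! Suc i = \<sigma> (take (Suc i) (ps @ [c'])))"
      proof (intro allI impI)
        fix i assume i: "Suc i < length (ps @ [c'])"
        show "ed_move tr tau E ((ps @ [c']) ! i) ((ps @ [c']) ! Suc i) \<and>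
          (owner ((ps @ [c']) ! i) = Dup \<longrightarrow> (ps @ [c']) ! Suc i = \<sigma> (take (Suc i) (ps @ [c'])))"
        proof (cases "Suc i < Suc n")
          case True
          have Fi: "ed_move tr tau E (ps ! i) (ps ! Suc i) \<and> (owner (ps ! i) = Dup \<longrightarrow> ps ! Suc i = \<sigma> (take (Suc i) ps))"
            using F lenps True unfolding fin_play_def by simp
          have q1: "(ps @ [c']) ! i = ps ! i" using True lenps by (simp add: nth_append)
          have q2: "(ps @ [c']) ! Suc i = ps ! Suc i" using True lenps by (simp add: nth_append)
          have q3: "take (Suc i) (ps @ [c']) = take (Suc i) ps" using True lenps by simp
          show ?thesis unfolding q1 q2 q3 by (rule Fi)
        next
          case False
          hence "i = n" using i lenps by simp
          moreover have "ps ! n = c" using lps lenps by (metis last_conv_nth diff_Suc_1 list.size(3) nat.distinct(1))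
          ultimately have e1: "(ps @ [c']) ! i = c" using lenps by (simp add: nth_append)
          have e2: "(ps @ [c']) ! Suc i = c'" using lenps \<open>i = n\<close> by (simp add: nth_append)
          have e3: "take (Suc i) (ps @ [c']) = ps" using lenps \<open>i = n\<close> by simp
          have e4: "owner c = Dup \<Longrightarrow> c' = \<sigma> ps" using lps by (simp add: c'_def stp_def)
          show ?thesis unfolding e1 e2 e3 using e4 mv by blast
        qed
      qed
    qed
    moreover have "pl (Suc n) = ps @ [c']" by (simp add: plS ps_def c'_def)
    ultimately show ?case using mv pS by simp
  qed
  have p0: "play 0 = c0" by (simp add: play_def pl0)
  have "fin_play tr tau E \<sigma> c0 (map play [0..<Suc n])" for n
  proof -
    have "fin_play tr tau E \<sigma> c0 (pl n)" using inv[of n] by blast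
    thus ?thesis by (simp only: plmap)
  qed
  hence "inf_play tr tau E \<sigma> c0 play"
    unfolding inf_fin using p0 by blast
  hence "\<exists>\<^sub>\<infinity>i. reward (play i)" using W unfolding dup_wins_def c0_def by blast
  then obtain i where ri: "reward (play i)" by (auto dest: frequently_ex)
  obtain k w where pi: "play i = Conf Spl (ss k, w) None None True" and tw: "tau_plus tr tau t w"
    using good_reward[OF conjunct2[OF inv[of i]] ri] by blast
  define B where "B = butlast (pl i)"
  have ne: "pl i \<noteq> []" using len[of i] by auto
  have eq2: "pl i = B @ [Conf Spl (ss k, w) None None True]"
    using append_butlast_last_id[OF ne] lastpl[of i] pi unfolding B_def by simp
  have "fin_play tr tau E \<sigma> c0 (pl i)" using inv[of i] by blast
  hence "fin_play tr tau E \<sigma> c0 (B @ [Conf Spl (ss k, w) None None True])"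
    using eq2 by simp
  from shift[OF this W[folded c0_def]]
  have "ed_equiv tr tau E (ss k) w" unfolding ed_equiv_def by blast
  thus ?thesis using tw by blast
qed

theorem lemma6p9:
  fixes tr :: "'s \<Rightarrow> 'a \<Rightarrow> 's \<Rightarrow> bool" and tau :: 'a
    and x y :: ob and s t :: 's and ss :: "nat \<Rightarrow> 's"
  assumes "ed_equiv tr tau (Eset x y) s t"
    and "ss 0 = s"
    and "\<forall>i. tr (ss i) tau (ss (Suc i))"
  shows "\<exists>t' k. tau_plus tr tau t t' \<and> ed_equiv tr tau (Eset x y) (ss k) t'"
proof -
  obtain \<sigma> where "dup_wins tr tau (Eset x y) \<sigma> (Conf Spl (s,t) None None False)"
    using assms(1) unfolding ed_equiv_def by blast
  hence W': "dup_wins tr tau (Eset x y) \<sigma> (Conf Spl (ss 0,t) None None False)"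
    using assms(2) by simp
  show ?thesis by (rule main[OF W' assms(3)])
qed

end
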